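(* Let $\Lambda,\Theta$ be Young functions of class $C^2$, and set $i_\lambda:=\inf_{t>0}\frac{t\Lambda''(t)}{\Lambda'(t)}$, $s_\lambda:=\sup_{t>0}\frac{t\Lambda''(t)}{\Lambda'(t)}$, $i_\theta:=\inf_{t>0}\frac{t\Theta''(t)}{\Theta'(t)}$, $s_\theta:=\sup_{t>0}\frac{t\Theta''(t)}{\Theta'(t)}$. Suppose $0<i_\lambda\le s_\lambda\le i_\theta\le s_\theta<+\infty$. Then $\Upsilon:=\Theta\circ\Lambda^{-1}$ is convex. If, moreover, $s_\Lambda<i_\Theta$, then $\Upsilon$ is a Young function.
   Context: A Young function is a convex $\Lambda:[0,\infty)\to[0,\infty)$ with $\Lambda(t)=0$ iff $t=0$, $\lim_{t\to0^+}\Lambda(t)/t=0$ and $\lim_{t\to\infty}\Lambda(t)/t=\infty$. For a differentiable Young function $\Lambda$, $i_\Lambda:=\inf_{t>0}\frac{t\Lambda'(t)}{\Lambda(t)}$ and $s_\Lambda:=\sup_{t>0}\frac{t\Lambda'(t)}{\Lambda(t)}$. *)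

theory Defs
  imports "HOL-Analysis.Analysis"
begin

text \<open>Young function on [0,inf), represented as a real function whose behaviour
  outside [0,inf) is irrelevant.\<close>
definition young_function :: "(real \<Rightarrow> real) \<Rightarrow> bool" where
  "young_function f \<longleftrightarrow>
     convex_on {0..} f \<and>
     (\<forall>t\<ge>0. f t \<ge> 0) \<and>
     (\<forall>t\<ge>0. f t = 0 \<longleftrightarrow> t = 0) \<and>
     ((\<lambda>t. f t / t) \<longlongrightarrow> 0) (at_right 0) \<and>
     filterlim (\<lambda>t. f t / t) at_top at_top"

definition C2_on :: "real set \<Rightarrow> (real \<Rightarrow> real) \<Rightarrow> bool" where
  "C2_on S f \<longleftrightarrow>
     (\<forall>x\<in>S. f differentiable (at x)) \<and>
     (\<forall>x\<in>S. deriv f differentiable (at x)) \<and>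
     continuous_on S (deriv (deriv f))"

text \<open>Indices, as extended reals (so that the value +infinity is possible).\<close>
definition lower_index :: "(real \<Rightarrow> real) \<Rightarrow> ereal" where
  "lower_index f = (INF t\<in>{0<..}. ereal (t * deriv f t / f t))"

definition upper_index :: "(real \<Rightarrow> real) \<Rightarrow> ereal" where
  "upper_index f = (SUP t\<in>{0<..}. ereal (t * deriv f t / f t))"

text \<open>i_lambda, s_lambda: indices of the derivative.\<close>
definition lower_index2 :: "(real \<Rightarrow> real) \<Rightarrow> ereal" where
  "lower_index2 f = lower_index (deriv f)"

definition upper_index2 :: "(real \<Rightarrow> real) \<Rightarrow> ereal" where
  "upper_index2 f = upper_index (deriv f)"

end

theory Submission
  imports Defs "HOL-Real_Asymp.Real_Asymp"
begin


lemma yf_cont: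
  assumes "young_function f" "C2_on {0<..} f"
  shows "continuous_on {0..} f"
proof -
  have d: "\<And>x. x > 0 \<Longrightarrow> f differentiable (at x)" using assms(2) by (auto simp: C2_on_def)
  have f0: "f 0 = 0" using assms(1) by (auto simp: young_function_def)
  have lim: "((\<lambda>t. f t / t) \<longlongrightarrow> 0) (at_right 0)" using assms(1) by (auto simp: young_function_def)
  have "((\<lambda>t. t * (f t / t)) \<longlongrightarrow> 0 * 0) (at_right 0)"
    by (intro tendsto_mult lim) (simp add: tendsto_ident_at)
  then have "((\<lambda>t. t * (f t / t)) \<longlongrightarrow> 0) (at_right 0)" by simp
  moreover have "eventually (\<lambda>t. t * (f t / t) = f t) (at_right 0)"
    by (rule eventually_mono[OF eventually_at_right_less]) simp
  ultimately have l0: "(f \<longlongrightarrow> f 0) (at_right 0)" using f0 Lim_transform_eventually by fastforce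
  show ?thesis
  proof (clarsimp simp: continuous_on_eq_continuous_within)
    fix x :: real assume "0 \<le> x"
    show "continuous (at x within {0..}) f"
    proof (cases "x = 0")
      case True
      have "at 0 within {0..} = at_right (0::real)"
        by (rule at_within_Ici_at_right)
      then show ?thesis using True l0 by (simp add: continuous_within)
    next
      case False
      then have "x > 0" using \<open>0 \<le> x\<close> by simp
      then show ?thesis using d differentiable_imp_continuous_within continuous_at_imp_continuous_within by blast
    qed
  qed
qed

lemma yf_deriv:
  assumes "C2_on {0<..} f" "x > 0"
  shows "(f has_real_derivative deriv f x) (at x)"
  using assms by (auto simp: C2_on_def DERIV_deriv_iff_real_differentiable)

lemma yf_deriv_pos:
  assumes "young_function f" "C2_on {0<..} f" "x > 0"
  shows "deriv f x > 0"
proof -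
  have cv: "convex_on {0..} f" and f0: "f 0 = 0" and fx: "f x > 0"
    using assms by (auto simp: young_function_def) (metis less_eq_real_def order_less_irrefl)
  have "f 0 - f x \<ge> deriv f x * (0 - x)"
  proof (rule convex_on_imp_above_tangent[OF cv])
    show "connected {0::real..}" by (simp add: is_interval_connected)
    show "x \<in> interior {0..}" using assms(3) by simp
    show "(f has_real_derivative deriv f x) (at x within {0..})"
      by (rule has_field_derivative_at_within[OF yf_deriv[OF assms(2,3)]])
  qed simp
  then have le: "f x \<le> deriv f x * x" using f0 by simp
  show ?thesis
  proof (rule ccontr)
    assume "\<not> deriv f x > 0"
    then have "deriv f x * x \<le> 0" using assms(3) by (simp add: mult_nonpos_nonneg)
    with le fx show False by simp
  qed
qed

lemma yf_strict:
  assumes "young_function f" "0 \<le> x" "x < y"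
  shows "f x < f y"
proof -
  have y0: "y > 0" using assms by simp
  have cv: "convex_on {0..} f" and f0: "f 0 = 0" and fy0: "f y \<ge> 0" and fyn: "f y \<noteq> 0"
    using assms(1) y0 by (auto simp: young_function_def)
  have fy: "f y > 0" using fy0 fyn by simp
  define t where "t = x / y"
  have t: "0 \<le> t" "t < 1" using assms y0 by (auto simp: t_def)
  have "f ((1 - t) *\<^sub>R 0 + t *\<^sub>R y) \<le> (1 - t) * f 0 + t * f y"
    by (rule convex_onD[OF cv]) (use t y0 in auto)
  moreover have "(1 - t) *\<^sub>R 0 + t *\<^sub>R y = x" using y0 by (simp add: t_def)
  ultimately have "f x \<le> t * f y" using f0 by simp
  also have "\<dots> < f y" using t fy by simp
  finally show ?thesis .
qed

lemma yf_inj: "young_function f \<Longrightarrow> inj_on f {0..}"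
proof (rule inj_onI)
  fix x y assume yf: "young_function f" and xy: "x \<in> {0..}" "y \<in> {0..}" "f x = f y"
  show "x = y"
  proof (rule ccontr)
    assume "x \<noteq> y"
    then consider "x < y" | "y < x" by linarith
    then show False
    proof cases
      case 1 then show False using yf_strict[OF yf, of x y] xy by simp
    next
      case 2 then show False using yf_strict[OF yf, of y x] xy by simp
    qed
  qed
qed

lemma yf_surj:
  assumes "young_function f" "C2_on {0<..} f" "s \<ge> 0"
  shows "s \<in> f ` {0..}"
proof -
  have "filterlim (\<lambda>t. f t / t) at_top at_top" using assms by (simp add: young_function_def)
  then have "eventually (\<lambda>t. f t / t \<ge> 1) at_top" by (simp add: filterlim_at_top)
  then obtain N where N: "\<And>t. t \<ge> N \<Longrightarrow> f t / t \<ge> 1" by (auto simp: eventually_at_top_linorder)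
  define t where "t = max N (max 1 s)"
  have t: "f t / t \<ge> 1" "t \<ge> max 1 s" by (intro N, simp add: t_def) (simp add: t_def)
  then have "f t \<ge> t" by (simp add: le_divide_eq)
  then have "f t \<ge> s" using t(2) by simp
  moreover have "f 0 \<le> s" using assms by (auto simp: young_function_def)
  moreover have "continuous_on {0..t} f"
    by (rule continuous_on_subset[OF yf_cont[OF assms(1,2)]]) auto
  moreover have "0 \<le> t" using t(2) by simp
  ultimately obtain u where "0 \<le> u" "u \<le> t" "f u = s"
    using IVT'[of f 0 s t] by blast
  then show ?thesis by force
qed

lemma yf_inv:
  assumes "young_function f" "C2_on {0<..} f" "s \<ge> 0"
  shows "inv_into {0..} f s \<ge> 0" "f (inv_into {0..} f s) = s"
  using yf_surj[OF assms] inv_into_into[of s f "{0..}"] f_inv_into_f[of s f "{0..}"] by auto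

lemma yf_inv2:
  assumes "young_function f" "u \<ge> 0"
  shows "inv_into {0..} f (f u) = u"
  using inv_into_f_f[OF yf_inj[OF assms(1)]] assms by simp


lemma yf_deriv2:
  assumes "C2_on {0<..} f" "x > 0"
  shows "(deriv f has_real_derivative deriv (deriv f) x) (at x)"
  using assms by (auto simp: C2_on_def DERIV_deriv_iff_real_differentiable)

lemma cauchy_mvt_yf:
  assumes f: "young_function f" "C2_on {0<..} f" and g: "young_function g" "C2_on {0<..} g"
    and ab: "0 \<le> a" "a < b"
  shows "\<exists>\<xi>. a < \<xi> \<and> \<xi> < b \<and> (g b - g a) / (f b - f a) = deriv g \<xi> / deriv f \<xi>"
proof -
  define h where "h = (\<lambda>x. (f b - f a) * g x - (g b - g a) * f x)"
  have "continuous_on {a..b} h" unfolding h_def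
    using continuous_on_subset[OF yf_cont[OF f]] continuous_on_subset[OF yf_cont[OF g]] ab
    by (intro continuous_intros) auto
  moreover have "\<And>x. a < x \<Longrightarrow> x < b \<Longrightarrow> h differentiable (at x)"
    unfolding h_def using f(2) g(2) ab by (auto simp: C2_on_def)
  ultimately obtain l \<xi> where \<xi>: "a < \<xi>" "\<xi> < b" "DERIV h \<xi> :> l" "h b - h a = (b - a) * l"
    using MVT[OF ab(2)] by blast
  have "h b - h a = 0" unfolding h_def by (simp add: algebra_simps)
  then have l0: "l = 0" using \<xi>(4) ab by simp
  have "DERIV h \<xi> :> (f b - f a) * deriv g \<xi> - (g b - g a) * deriv f \<xi>"
    unfolding h_def using ab \<xi>
    by (auto intro!: derivative_eq_intros yf_deriv[OF f(2)] yf_deriv[OF g(2)])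
  with \<xi>(3) l0 have eq: "(f b - f a) * deriv g \<xi> = (g b - g a) * deriv f \<xi>"
    using DERIV_unique by fastforce
  have "f b - f a > 0" using yf_strict[OF f(1) ab] by simp
  moreover have "deriv f \<xi> > 0" using yf_deriv_pos[OF f, of \<xi>] ab \<xi> by simp
  ultimately have "(g b - g a) / (f b - f a) = deriv g \<xi> / deriv f \<xi>"
    using eq by (simp add: field_simps)
  then show ?thesis using \<xi> by blast
qed

lemma ratio_mono:
  assumes f: "young_function f" "C2_on {0<..} f" and g: "young_function g" "C2_on {0<..} g"
    and hyp: "\<And>t. t > 0 \<Longrightarrow> deriv (deriv f) t * deriv g t \<le> deriv (deriv g) t * deriv f t"
    and xy: "0 < x" "x \<le> y"
  shows "deriv g x / deriv f x \<le> deriv g y / deriv f y"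
proof -
  define q where "q = (\<lambda>t. deriv g t / deriv f t)"
  have D: "DERIV q t :> (deriv (deriv g) t * deriv f t - deriv g t * deriv (deriv f) t) / (deriv f t * deriv f t)"
    if "t > 0" for t
    unfolding q_def using yf_deriv_pos[OF f that]
    by (intro DERIV_divide yf_deriv2[OF f(2) that] yf_deriv2[OF g(2) that]) simp
  have "q x \<le> q y"
  proof (rule DERIV_nonneg_imp_increasing_open[OF xy(2)])
    fix t assume t: "x < t" "t < y"
    then have t0: "t > 0" using xy by simp
    have "deriv (deriv g) t * deriv f t - deriv g t * deriv (deriv f) t \<ge> 0"
      using hyp[OF t0] by (simp add: mult.commute)
    then have "(deriv (deriv g) t * deriv f t - deriv g t * deriv (deriv f) t) / (deriv f t * deriv f t) \<ge> 0"
      by simp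
    then show "\<exists>y. DERIV q t :> y \<and> 0 \<le> y" using D[OF t0] by blast
  next
    show "continuous_on {x..y} q"
    proof (intro continuous_at_imp_continuous_on ballI)
      fix t assume "t \<in> {x..y}"
      then have "t > 0" using xy by simp
      then show "isCont q t" using D DERIV_isCont by blast
    qed
  qed
  then show ?thesis by (simp add: q_def)
qed

lemma slope_ineq:
  assumes f: "young_function f" "C2_on {0<..} f" and g: "young_function g" "C2_on {0<..} g"
    and hyp: "\<And>t. t > 0 \<Longrightarrow> deriv (deriv f) t * deriv g t \<le> deriv (deriv g) t * deriv f t"
    and abc: "0 \<le> a" "a < b" "b < c"
  shows "(g b - g a) / (f b - f a) \<le> (g c - g b) / (f c - f b)"
proof -
  obtain \<xi> where \<xi>: "a < \<xi>" "\<xi> < b" "(g b - g a) / (f b - f a) = deriv g \<xi> / deriv f \<xi>"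
    using cauchy_mvt_yf[OF f g abc(1,2)] by blast
  obtain \<eta> where \<eta>: "b < \<eta>" "\<eta> < c" "(g c - g b) / (f c - f b) = deriv g \<eta> / deriv f \<eta>"
    using cauchy_mvt_yf[OF f g, of b c] abc by auto
  show ?thesis unfolding \<xi>(3) \<eta>(3)
    by (rule ratio_mono[OF f g hyp]) (use \<xi> \<eta> abc in auto)
qed



lemma yf_less_iff:
  assumes "young_function f" "0 \<le> a" "0 \<le> b"
  shows "f a < f b \<longleftrightarrow> a < b"
  using yf_strict[OF assms(1)] assms by (metis linorder_neq_iff order_less_asym)

lemma part1:
  fixes L T :: "real \<Rightarrow> real"
  assumes L: "young_function L" "C2_on {0<..} L" and T: "young_function T" "C2_on {0<..} T"
    and hyp: "\<And>t. t > 0 \<Longrightarrow> deriv (deriv L) t * deriv T t \<le> deriv (deriv T) t * deriv L t"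
  shows "convex_on {0..} (T \<circ> inv_into {0..} L)"
proof (rule convex_on_linorderI)
  show "convex {0::real..}" by simp
  fix t x y :: real
  assume t: "0 < t" "t < 1" and xy: "x \<in> {0..}" "y \<in> {0..}" "x < y"
  define I where "I = inv_into {0..} L"
  define s where "s = (1 - t) * x + t * y"
  have sx: "s - x = t * (y - x)" and ys: "y - s = (1 - t) * (y - x)" by (simp_all add: s_def algebra_simps)
  have p1: "t * (y - x) > 0" and p2: "(1 - t) * (y - x) > 0" using t xy by simp_all
  have xs1: "x < s" using sx p1 by linarith
  have xs2: "s < y" using ys p2 by linarith
  note xs = xs1 xs2
  have s0: "s \<ge> 0" using xs xy by simp
  have Ix: "I x \<ge> 0" "L (I x) = x" using yf_inv[OF L, of x] xy by (auto simp: I_def)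
  have Iy: "I y \<ge> 0" "L (I y) = y" using yf_inv[OF L, of y] xy by (auto simp: I_def)
  have Is: "I s \<ge> 0" "L (I s) = s" using yf_inv[OF L, of s] s0 by (auto simp: I_def)
  have u1: "I x < I s" using yf_less_iff[OF L(1) Ix(1) Is(1)] Ix Is xs by simp
  have u2: "I s < I y" using yf_less_iff[OF L(1) Is(1) Iy(1)] Iy Is xs by simp
  have sl: "(T (I s) - T (I x)) / (L (I s) - L (I x)) \<le> (T (I y) - T (I s)) / (L (I y) - L (I s))"
    by (rule slope_ineq[OF L T hyp Ix(1) u1 u2])
  define A where "A = T (I s) - T (I x)"
  define B where "B = T (I y) - T (I s)"
  define D where "D = y - x"
  have D: "D > 0" using xy by (simp add: D_def)
  have "A / (t * D) \<le> B / ((1 - t) * D)" using sl Ix Iy Is sx ys by (simp add: A_def B_def D_def)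
  then have "A / (t * D) * (t * (1 - t) * D) \<le> B / ((1 - t) * D) * (t * (1 - t) * D)"
    using t D by (intro mult_right_mono) auto
  moreover have "A / (t * D) * (t * (1 - t) * D) = (1 - t) * A" using t D by (simp add: field_simps)
  moreover have "B / ((1 - t) * D) * (t * (1 - t) * D) = t * B" using t D by (simp add: field_simps)
  ultimately have "(1 - t) * A \<le> t * B" by simp
  then have "T (I s) \<le> (1 - t) * T (I x) + t * T (I y)" by (simp add: A_def B_def algebra_simps)
  then show "(T \<circ> inv_into {0..} L) ((1 - t) *\<^sub>R x + t *\<^sub>R y)
     \<le> (1 - t) * (T \<circ> inv_into {0..} L) x + t * (T \<circ> inv_into {0..} L) y"
    by (simp add: I_def s_def)
qed


lemma h_bounds:
  fixes L T :: "real \<Rightarrow> real"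
  assumes L: "young_function L" "C2_on {0<..} L" and T: "young_function T" "C2_on {0<..} T"
    and r: "r1 < r2"
    and hL: "\<And>t. t > 0 \<Longrightarrow> t * deriv L t / L t \<le> r1"
    and hT: "\<And>t. t > 0 \<Longrightarrow> t * deriv T t / T t \<ge> r2"
  obtains K c where "K > 0" "c > 0"
    "\<And>u. 0 < u \<Longrightarrow> u \<le> 1 \<Longrightarrow> T u / L u \<le> K * u powr c"
    "\<And>u. 1 \<le> u \<Longrightarrow> T u / L u \<ge> K * u powr c"
proof -
  define c where "c = r2 - r1"
  have c: "c > 0" using r by (simp add: c_def)
  have pos: "L u > 0" "T u > 0" if "u > 0" for u
    using L(1) T(1) that by (auto simp: young_function_def) (smt (verit))+
  define \<phi> where "\<phi> = (\<lambda>u. ln (T u) - ln (L u) - c * ln u)"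
  have D: "DERIV \<phi> u :> deriv T u / T u - deriv L u / L u - c * (1 / u)" if u: "u > 0" for u
    unfolding \<phi>_def using pos[OF u] u
    by (auto intro!: derivative_eq_intros yf_deriv[OF L(2) u] yf_deriv[OF T(2) u])
  have Dnn: "deriv T u / T u - deriv L u / L u - c * (1 / u) \<ge> 0" if u: "u > 0" for u
  proof -
    have "u * (deriv T u / T u - deriv L u / L u - c * (1 / u))
        = u * deriv T u / T u - u * deriv L u / L u - c" using u by (simp add: field_simps)
    also have "\<dots> \<ge> 0" using hL[OF u] hT[OF u] by (simp add: c_def)
    finally show ?thesis using u by (simp add: zero_le_mult_iff)
  qed
  have mono: "\<phi> x \<le> \<phi> y" if xy: "0 < x" "x \<le> y" for x y
  proof (rule DERIV_nonneg_imp_increasing_open[OF xy(2)])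
    fix t assume "x < t" "t < y"
    then have t: "t > 0" using xy by simp
    show "\<exists>y. DERIV \<phi> t :> y \<and> 0 \<le> y" using D[OF t] Dnn[OF t] by blast
  next
    show "continuous_on {x..y} \<phi>"
    proof (intro continuous_at_imp_continuous_on ballI)
      fix t assume "t \<in> {x..y}"
      then have "t > 0" using xy by simp
      then show "isCont \<phi> t" using D DERIV_isCont by blast
    qed
  qed
  define K where "K = exp (\<phi> 1)"
  have eq: "T u / L u = exp (\<phi> u) * u powr c" if u: "u > 0" for u
  proof -
    have "exp (\<phi> u) * u powr c = exp (\<phi> u + c * ln u)" using u by (simp add: powr_def exp_add)
    also have "\<phi> u + c * ln u = ln (T u / L u)" using pos[OF u] by (simp add: \<phi>_def ln_div)
    also have "exp (ln (T u / L u)) = T u / L u" using pos[OF u] by simp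
    finally show ?thesis by simp
  qed
  show ?thesis
  proof (rule that[of K c])
    show "K > 0" by (simp add: K_def)
    show "c > 0" by (rule c)
    fix u :: real
    show "T u / L u \<le> K * u powr c" if "0 < u" "u \<le> 1"
      using eq[OF that(1)] mono[OF that] by (simp add: K_def mult_right_mono)
    show "T u / L u \<ge> K * u powr c" if "1 \<le> u"
      using eq[of u] mono[of 1 u] that by (simp add: K_def mult_right_mono)
  qed
qed


lemma part2:
  fixes L T :: "real \<Rightarrow> real"
  assumes L: "young_function L" "C2_on {0<..} L" and T: "young_function T" "C2_on {0<..} T"
    and cv: "convex_on {0..} (T \<circ> inv_into {0..} L)"
    and K: "K > 0" and c: "c > 0"
    and b1: "\<And>u. 0 < u \<Longrightarrow> u \<le> 1 \<Longrightarrow> T u / L u \<le> K * u powr c"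
    and b2: "\<And>u. 1 \<le> u \<Longrightarrow> T u / L u \<ge> K * u powr c"
  shows "young_function (T \<circ> inv_into {0..} L)"
proof -
  define I where "I = inv_into {0..} L"
  have I: "I s \<ge> 0" "L (I s) = s" if "s \<ge> 0" for s using yf_inv[OF L that] by (auto simp: I_def)
  have IL: "I (L u) = u" if "u \<ge> 0" for u using yf_inv2[OF L(1) that] by (simp add: I_def)
  have L0: "L 0 = 0" and T0: "T 0 = 0" using L(1) T(1) by (auto simp: young_function_def)
  have pos: "L u > 0" "T u > 0" if "u > 0" for u
    using L(1) T(1) that by (auto simp: young_function_def) (smt (verit))+
  have Ipos: "I s > 0" if "s > 0" for s
    using I[of s] that L0 by (metis less_eq_real_def order_less_irrefl)
  have eqv: "(T \<circ> I) s / s = T (I s) / L (I s)" if "s > 0" for s using I[of s] that by simp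
  have h0: "((\<lambda>u. T u / L u) \<longlongrightarrow> 0) (at_right 0)"
  proof (rule tendsto_sandwich[where f = "\<lambda>_. 0" and h = "\<lambda>u. K * u powr c"])
    have "eventually (\<lambda>u. u \<in> {0<..<1}) (at_right (0::real))" by (rule eventually_at_right_real) simp
    then show "eventually (\<lambda>u. 0 \<le> T u / L u) (at_right 0)"
      by (rule eventually_mono) (use pos in \<open>auto intro: less_imp_le\<close>)
    from \<open>eventually (\<lambda>u. u \<in> {0<..<1}) (at_right (0::real))\<close>
    show "eventually (\<lambda>u. T u / L u \<le> K * u powr c) (at_right 0)"
      by (rule eventually_mono) (use b1 in auto)
    show "((\<lambda>u. K * u powr c) \<longlongrightarrow> 0) (at_right 0)" using c by real_asymp
  qed simp
  have I0: "filterlim I (at_right 0) (at_right 0)"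
  proof (rule tendsto_imp_filterlim_at_right)
    show "eventually (\<lambda>s. I s > 0) (at_right 0)"
      by (rule eventually_mono[OF eventually_at_right_less]) (use Ipos in auto)
    show "(I \<longlongrightarrow> 0) (at_right 0)"
    proof (rule order_tendstoI)
      fix a :: real assume "a < 0"
      show "eventually (\<lambda>s. a < I s) (at_right 0)"
        by (rule eventually_mono[OF eventually_at_right_less]) (use Ipos \<open>a < 0\<close> in force)
    next
      fix e :: real assume e: "0 < e"
      have "eventually (\<lambda>s. s \<in> {0<..<L e}) (at_right 0)" using pos(1)[OF e] by (intro eventually_at_right_real)
      then show "eventually (\<lambda>s. I s < e) (at_right 0)"
      proof (rule eventually_mono)
        fix s assume s: "s \<in> {0<..<L e}"
        then have "L (I s) < L e" using I[of s] by simp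
        moreover have "I s \<ge> 0" using I[of s] s by simp
        ultimately show "I s < e" using yf_less_iff[OF L(1) \<open>I s \<ge> 0\<close>, of e] e by simp
      qed
    qed
  qed
  have lim0: "((\<lambda>s. (T \<circ> I) s / s) \<longlongrightarrow> 0) (at_right 0)"
  proof -
    have "((\<lambda>s. T (I s) / L (I s)) \<longlongrightarrow> 0) (at_right 0)"
      using filterlim_compose[OF h0 I0] by simp
    moreover have "eventually (\<lambda>s. T (I s) / L (I s) = (T \<circ> I) s / s) (at_right 0)"
      by (rule eventually_mono[OF eventually_at_right_less]) (simp add: I)
    ultimately show ?thesis by (rule Lim_transform_eventually)
  qed
  have hinf: "filterlim (\<lambda>u. T u / L u) at_top at_top"
  proof (rule filterlim_at_top_mono[where f = "\<lambda>u. K * u powr c"])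
    show "filterlim (\<lambda>u. K * u powr c) at_top at_top" using c K by real_asymp
    show "eventually (\<lambda>u. K * u powr c \<le> T u / L u) at_top"
      using b2 by (auto simp: eventually_at_top_linorder)
  qed
  have Iinf: "filterlim I at_top at_top"
  proof (subst filterlim_at_top, intro allI)
    fix Z :: real
    show "eventually (\<lambda>s. Z \<le> I s) at_top"
      unfolding eventually_at_top_linorder
    proof (intro exI[of _ "L (max Z 0)"] allI impI)
      fix s assume s: "L (max Z 0) \<le> s"
      have s0: "s \<ge> 0" using s L(1) by (auto simp: young_function_def) (smt (verit))
      have "\<not> L (I s) < L (max Z 0)" using I[OF s0] s by simp
      then have "\<not> I s < max Z 0" using yf_less_iff[OF L(1) I(1)[OF s0], of "max Z 0"] by simp
      then show "Z \<le> I s" by simp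
    qed
  qed
  have liminf: "filterlim (\<lambda>s. (T \<circ> I) s / s) at_top at_top"
  proof -
    have "filterlim (\<lambda>s. T (I s) / L (I s)) at_top at_top"
      using filterlim_compose[OF hinf Iinf] by simp
    moreover have "eventually (\<lambda>s. T (I s) / L (I s) = (T \<circ> I) s / s) at_top"
      using I by (auto simp: eventually_at_top_linorder intro!: exI[of _ 1])
    ultimately show ?thesis by (rule filterlim_mono_eventually[OF _ order_refl order_refl])
  qed
  have nn: "\<forall>t\<ge>0. (T \<circ> I) t \<ge> 0" using I T(1) by (auto simp: young_function_def)
  have zero: "\<forall>t\<ge>0. (T \<circ> I) t = 0 \<longleftrightarrow> t = 0"
  proof (intro allI impI)
    fix t :: real assume t: "t \<ge> 0"
    show "(T \<circ> I) t = 0 \<longleftrightarrow> t = 0"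
    proof
      assume "(T \<circ> I) t = 0"
      then have "I t = 0" using T(1) I[OF t] by (auto simp: young_function_def)
      then show "t = 0" using I[OF t] L0 by simp
    next
      assume "t = 0"
      then show "(T \<circ> I) t = 0" using IL[of 0] L0 T0 by simp
    qed
  qed
  show ?thesis unfolding young_function_def using cv nn zero lim0 liminf by (simp add: I_def)
qed


theorem proposition2p11:
  fixes \<Lambda> \<Theta> :: "real \<Rightarrow> real"
  assumes "young_function \<Lambda>" and "young_function \<Theta>"
    and "C2_on {0<..} \<Lambda>" and "C2_on {0<..} \<Theta>"
    and "0 < lower_index2 \<Lambda>"
    and "lower_index2 \<Lambda> \<le> upper_index2 \<Lambda>"
    and "upper_index2 \<Lambda> \<le> lower_index2 \<Theta>"
    and "lower_index2 \<Theta> \<le> upper_index2 \<Theta>"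
    and "upper_index2 \<Theta> < \<infinity>"
  shows "convex_on {0..} (\<Theta> \<circ> inv_into {0..} \<Lambda>) \<and>
         (upper_index \<Lambda> < lower_index \<Theta> \<longrightarrow>
           young_function (\<Theta> \<circ> inv_into {0..} \<Lambda>))"
proof -
  note L = assms(1,3) and T = assms(2,4)
  have hyp: "deriv (deriv \<Lambda>) t * deriv \<Theta> t \<le> deriv (deriv \<Theta>) t * deriv \<Lambda> t" if t: "t > 0" for t
  proof -
    have "ereal (t * deriv (deriv \<Lambda>) t / deriv \<Lambda> t) \<le> upper_index2 \<Lambda>"
      unfolding upper_index2_def upper_index_def using t by (intro SUP_upper) simp
    also have "\<dots> \<le> lower_index2 \<Theta>" by (rule assms(7))
    also have "\<dots> \<le> ereal (t * deriv (deriv \<Theta>) t / deriv \<Theta> t)"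
      unfolding lower_index2_def lower_index_def using t by (intro INF_lower) simp
    finally have le: "t * deriv (deriv \<Lambda>) t / deriv \<Lambda> t \<le> t * deriv (deriv \<Theta>) t / deriv \<Theta> t"
      by simp
    have p1: "deriv \<Lambda> t > 0" by (rule yf_deriv_pos[OF L t])
    have p2: "deriv \<Theta> t > 0" by (rule yf_deriv_pos[OF T t])
    show ?thesis using le p1 p2 t by (simp add: divide_simps mult.commute mult.left_commute)
  qed
  have cv: "convex_on {0..} (\<Theta> \<circ> inv_into {0..} \<Lambda>)" by (rule part1[OF L T hyp])
  moreover have "young_function (\<Theta> \<circ> inv_into {0..} \<Lambda>)" if lt: "upper_index \<Lambda> < lower_index \<Theta>"
  proof -
    obtain r1 where r1: "upper_index \<Lambda> < ereal r1" "ereal r1 < lower_index \<Theta>"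
      using ereal_dense2[OF lt] by blast
    obtain r2 where r2: "ereal r1 < ereal r2" "ereal r2 < lower_index \<Theta>"
      using ereal_dense2[OF r1(2)] by blast
    have r: "r1 < r2" using r2(1) by simp
    have hL: "t * deriv \<Lambda> t / \<Lambda> t \<le> r1" if t: "t > 0" for t
    proof -
      have "ereal (t * deriv \<Lambda> t / \<Lambda> t) \<le> upper_index \<Lambda>"
        unfolding upper_index_def using t by (intro SUP_upper) simp
      then have "ereal (t * deriv \<Lambda> t / \<Lambda> t) < ereal r1" using r1(1) by (rule le_less_trans)
      then show ?thesis by simp
    qed
    have hT: "t * deriv \<Theta> t / \<Theta> t \<ge> r2" if t: "t > 0" for t
    proof -
      have "lower_index \<Theta> \<le> ereal (t * deriv \<Theta> t / \<Theta> t)"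
        unfolding lower_index_def using t by (intro INF_lower) simp
      with r2(2) have "ereal r2 < ereal (t * deriv \<Theta> t / \<Theta> t)" by (rule less_le_trans)
      then show ?thesis by simp
    qed
    obtain K c where Kc: "K > 0" "c > 0"
      "\<And>u. 0 < u \<Longrightarrow> u \<le> 1 \<Longrightarrow> \<Theta> u / \<Lambda> u \<le> K * u powr c"
      "\<And>u. 1 \<le> u \<Longrightarrow> \<Theta> u / \<Lambda> u \<ge> K * u powr c"
      using h_bounds[OF L T r hL hT] by blast
    show ?thesis by (rule part2[OF L T cv Kc])
  qed
  ultimately show ?thesis by blast
qed

end
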